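(* Let $d\ge2$, $u\in(0,\infty)$, and let $R:[-u,u]\to[0,\infty)$ be continuous and symmetric ($R(-s)=R(s)$). Let $$K=\Big\{(x_1,\dots,x_d)\in\mathbb{R}^d: x_1\in[-u,u],\ \sum_{i=2}^dx_i^2\le R(x_1)^2\Big\},$$ and assume there exist $x_K\in K$ and $r_K>0$ with $B^d(x_K,r_K)\subset K$. Then there is a constant $c_K\in(0,\infty)$ depending only on $K$ and $d$ such that $$\mathrm{vol}(K\setminus(\varrho K+x))\ge c_K\|x\|$$ for all rotations $\varrho$ of $\mathbb{R}^d$ and all $x\in\mathbb{R}^d$ with $K\cap(\varrho K+x)\ne\varnothing$.
   Context: $B^d(x,r)$ is the closed Euclidean ball of radius $r$ centred at $x$; a rotation is an element of $SO(d)$ acting linearly on $\mathbb{R}^d$. *)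

theory Defs
  imports "HOL-Analysis.Analysis"
begin

definition rotation_matrix :: "real^'n^'n \<Rightarrow> bool" where
  "rotation_matrix Q \<longleftrightarrow> orthogonal_matrix Q \<and> det Q = 1"

definition rev_body :: "'n::finite \<Rightarrow> real \<Rightarrow> (real \<Rightarrow> real) \<Rightarrow> (real^'n) set" where
  "rev_body e u R = {x. x $ e \<in> {-u..u} \<and> (\<Sum>i\<in>UNIV - {e}. (x $ i)^2) \<le> (R (x $ e))^2}"

end

theory Submission
  imports Defs "HOL-Library.Countable"
begin


lemma prod_Basis_vec:
  fixes f :: "real^'n \<Rightarrow> real"
  shows "(\<Prod>b\<in>(Basis::(real^'n) set). g (b)) = (\<Prod>i\<in>UNIV. g (axis i 1))"
proof -
  have "(Basis::(real^'n) set) = (\<lambda>i. axis i 1) ` UNIV"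
    by (auto simp: Basis_vec_def)
  moreover have "inj (\<lambda>i::'n. axis i (1::real))"
    by (auto simp: inj_def axis_eq_axis)
  ultimately show ?thesis by (metis (no_types, lifting) prod.reindex comp_apply prod.cong)
qed

lemma emeasure_box_cart:
  fixes l u :: "real^'n"
  assumes "\<And>i. l $ i \<le> u $ i"
  shows "emeasure lborel (box l u) = (\<Prod>i\<in>UNIV. u $ i - l $ i)"
proof -
  have "\<forall>b\<in>Basis. l \<bullet> b \<le> u \<bullet> b" using assms by (auto simp: Basis_vec_def inner_axis)
  then show ?thesis
    by (simp add: emeasure_lborel_box_eq prod_Basis_vec[where g="\<lambda>b. (u - l) \<bullet> b"] inner_axis)
qed

lemma lborel_reindex:
  fixes h :: "'a::finite \<Rightarrow> 'b::finite"
  assumes h: "bij h"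
  shows "distr lborel borel (\<lambda>v::real^'b. (\<chi> i. v $ h i) :: real^'a) = lborel"
proof (rule lborel_eqI[symmetric])
  let ?F = "\<lambda>v::real^'b. (\<chi> i. v $ h i) :: real^'a"
  have lin: "linear ?F" by (rule linearI) (auto simp: vec_eq_iff)
  then have meas: "?F \<in> borel_measurable borel"
    by (intro borel_measurable_continuous_onI linear_continuous_on) (simp add: linear_conv_bounded_linear)
  fix l u :: "real^'a"
  assume le: "\<And>b. b \<in> Basis \<Longrightarrow> l \<bullet> b \<le> u \<bullet> b"
  then have le': "l $ i \<le> u $ i" for i
    using le[of "axis i 1"] by (auto simp: Basis_vec_def inner_axis)
  let ?l = "(\<chi> j. l $ inv h j) :: real^'b" and ?u = "(\<chi> j. u $ inv h j) :: real^'b"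
  have pre: "?F -` box l u = box ?l ?u"
  proof -
    have "(\<forall>i. l $ i < v $ h i \<and> v $ h i < u $ i) \<longleftrightarrow> (\<forall>j. l $ inv h j < v $ j \<and> v $ j < u $ inv h j)" for v :: "real^'b"
      by (metis bij_inv_eq_iff h)
    then show ?thesis by (auto simp: mem_box_cart)
  qed
  have "emeasure (distr lborel borel ?F) (box l u) = emeasure lborel (?F -` box l u)"
    by (simp add: emeasure_distr meas)
  also have "\<dots> = (\<Prod>j\<in>UNIV. u $ inv h j - l $ inv h j)"
    unfolding pre by (subst emeasure_box_cart) (auto simp: le')
  also have "\<dots> = (\<Prod>i\<in>UNIV. u $ i - l $ i)"
    using prod.reindex[of "inv h" UNIV "\<lambda>i. u $ i - l $ i"] h
    by (simp add: bij_imp_bij_inv bij_is_inj bij_is_surj inj_on_inv_into surj_imp_inv_eq)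
  also have "\<dots> = (\<Prod>b\<in>Basis. (u - l) \<bullet> b)"
    by (simp add: prod_Basis_vec[where g="\<lambda>b. (u - l) \<bullet> b"] inner_axis)
  finally show "emeasure (distr lborel borel ?F) (box l u) = (\<Prod>b\<in>Basis. (u - l) \<bullet> b)" 
    by simp
qed simp

typedef 'a wo = "UNIV :: 'a set" by auto

instance wo :: (finite) finite
proof
  have "(UNIV :: 'a wo set) = Abs_wo ` UNIV"
    by (metis Rep_wo_inverse surj_def)
  then show "finite (UNIV :: 'a wo set)" by (metis finite finite_imageI)
qed

instantiation wo :: (countable) linorder
begin
definition less_eq_wo :: "'a wo \<Rightarrow> 'a wo \<Rightarrow> bool" where
  "less_eq_wo x y \<longleftrightarrow> to_nat (Rep_wo x) \<le> to_nat (Rep_wo y)"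
definition less_wo :: "'a wo \<Rightarrow> 'a wo \<Rightarrow> bool" where
  "less_wo x y \<longleftrightarrow> to_nat (Rep_wo x) < to_nat (Rep_wo y)"
instance
proof
  fix x y z :: "'a wo"
  show "(x < y) = (x \<le> y \<and> \<not> y \<le> x)" by (auto simp: less_eq_wo_def less_wo_def)
  show "x \<le> x" by (simp add: less_eq_wo_def)
  show "x \<le> y \<Longrightarrow> y \<le> z \<Longrightarrow> x \<le> z" by (simp add: less_eq_wo_def)
  show "x \<le> y \<Longrightarrow> y \<le> x \<Longrightarrow> x = y"
    by (simp add: less_eq_wo_def Rep_wo_inject[symmetric])
  show "x \<le> y \<or> y \<le> x" by (auto simp: less_eq_wo_def)
qed
end

instance wo :: (countable) wellorder
proof
  fix P :: "'a wo \<Rightarrow> bool" and a :: "'a wo"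
  assume step: "\<And>x. (\<And>y. y < x \<Longrightarrow> P y) \<Longrightarrow> P x"
  show "P a"
  proof (induction a rule: measure_induct_rule[of "\<lambda>x. to_nat (Rep_wo x)"])
    case (less x)
    show ?case by (rule step, rule less) (simp add: less_wo_def)
  qed
qed

lemma lin_meas:
  fixes h :: "'a::euclidean_space \<Rightarrow> 'b::euclidean_space"
  shows "linear h \<Longrightarrow> h \<in> borel_measurable borel"
  by (intro borel_measurable_continuous_onI linear_continuous_on) (simp add: linear_conv_bounded_linear)

lemma orth_lborel_wo:
  fixes g :: "real^'m::{finite,wellorder} \<Rightarrow> real^'m::_"
  assumes g: "orthogonal_transformation g"
  shows "distr lborel borel g = lborel"
proof (rule lborel_eqI[symmetric])
  have lin: "linear g" using g orthogonal_transformation_linear by blast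
  then have meas: "g \<in> borel_measurable borel"
    by (intro borel_measurable_continuous_onI linear_continuous_on) (simp add: linear_conv_bounded_linear)
  fix l u :: "real^'m::{finite,wellorder}"
  let ?B = "box l u"
  have gi: "orthogonal_transformation (inv g)" using g orthogonal_transformation_inv by blast
  have pre: "g -` ?B = inv g ` ?B"
    using g orthogonal_transformation_bij bij_vimage_eq_inv_image by blast
  have Bm: "?B \<in> lmeasurable" by simp
  have im: "inv g ` ?B \<in> lmeasurable" "measure lebesgue (inv g ` ?B) = measure lebesgue ?B"
    using measurable_orthogonal_image[OF gi Bm] measure_orthogonal_image[OF gi Bm] by auto
  have bor: "g -` ?B \<in> sets borel" using meas by (simp add: measurable_sets_borel)
  have "emeasure (distr lborel borel g) ?B = emeasure lborel (g -` ?B)"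
    by (simp add: emeasure_distr meas)
  also have "\<dots> = emeasure lebesgue (g -` ?B)" using bor by simp
  also have "\<dots> = ennreal (measure lebesgue (inv g ` ?B))"
    using im(1) unfolding pre by (simp add: emeasure_eq_measure2)
  also have "\<dots> = ennreal (measure lebesgue ?B)" using im(2) by simp
  also have "\<dots> = emeasure lebesgue ?B" using Bm by (simp add: emeasure_eq_measure2)
  also have "\<dots> = emeasure lborel ?B" by simp
  finally have eq: "emeasure (distr lborel borel g) ?B = emeasure lborel ?B" .
  assume "\<And>b. b \<in> Basis \<Longrightarrow> l \<bullet> b \<le> u \<bullet> b"
  then show "emeasure (distr lborel borel g) ?B = (\<Prod>b\<in>Basis. (u - l) \<bullet> b)"
    unfolding eq by (simp add: emeasure_lborel_box_eq)
qed simp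

lemma orth_lborel:
  fixes f :: "real^'n::finite \<Rightarrow> real^'n"
  assumes f: "orthogonal_transformation f"
  shows "distr lborel borel f = lborel"
proof -
  define \<phi> where "\<phi> = (\<lambda>v::real^'n. (\<chi> i. v $ Rep_wo i) :: real^('n wo))"
  define \<psi> where "\<psi> = (\<lambda>w::real^('n wo). (\<chi> j. w $ Abs_wo j) :: real^'n)"
  have bR: "bij (Rep_wo :: 'n wo \<Rightarrow> 'n)"
    unfolding bij_def inj_def using type_definition.Rep_range[OF type_definition_wo]
    by (simp add: Rep_wo_inject)
  have bA: "bij (Abs_wo :: 'n \<Rightarrow> 'n wo)"
    unfolding bij_def inj_def using type_definition.Abs_image[OF type_definition_wo]
    by (simp add: Abs_wo_inject)
  have d\<phi>: "distr lborel borel \<phi> = lborel" unfolding \<phi>_def by (rule lborel_reindex[OF bR])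
  have d\<psi>: "distr lborel borel \<psi> = lborel" unfolding \<psi>_def by (rule lborel_reindex[OF bA])
  have \<psi>\<phi>: "\<psi> (\<phi> v) = v" for v by (simp add: \<phi>_def \<psi>_def vec_eq_iff Abs_wo_inverse)
  have \<phi>\<psi>: "\<phi> (\<psi> w) = w" for w by (simp add: \<phi>_def \<psi>_def vec_eq_iff Rep_wo_inverse)
  have lin\<phi>: "linear \<phi>" unfolding \<phi>_def by (rule linearI) (auto simp: vec_eq_iff)
  have lin\<psi>: "linear \<psi>" unfolding \<psi>_def by (rule linearI) (auto simp: vec_eq_iff)
  have in\<phi>: "\<phi> v \<bullet> \<phi> w = v \<bullet> w" for v w
  proof -
    have "\<phi> v \<bullet> \<phi> w = (\<Sum>i\<in>UNIV. v $ Rep_wo i * w $ Rep_wo i)"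
      by (simp add: \<phi>_def inner_vec_def)
    also have "\<dots> = (\<Sum>j\<in>UNIV. v $ j * w $ j)"
      using sum.reindex[of "Rep_wo :: 'n wo \<Rightarrow> 'n" UNIV "\<lambda>j. v $ j * w $ j"] bR
      by (simp add: bij_is_inj bij_is_surj)
    finally show ?thesis by (simp add: inner_vec_def)
  qed
  have in\<psi>: "\<psi> v \<bullet> \<psi> w = v \<bullet> w" for v w
    using in\<phi>[of "\<psi> v" "\<psi> w"] by (simp add: \<phi>\<psi>)
  let ?g = "\<phi> \<circ> f \<circ> \<psi>"
  have linf: "linear f" using f by (simp add: orthogonal_transformation_def)
  have inf: "f a \<bullet> f b = a \<bullet> b" for a b using f by (simp add: orthogonal_transformation_def)
  have lg: "linear ?g"
    by (intro linear_compose lin\<psi> lin\<phi> linf)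
  have og: "orthogonal_transformation ?g"
    unfolding orthogonal_transformation_def using lg by (simp add: in\<phi> in\<psi> inf)
  have mf: "\<phi> \<in> borel_measurable borel" "\<psi> \<in> borel_measurable borel"
     "?g \<in> borel_measurable borel"
    using lin_meas lin\<phi> lin\<psi> lg by blast+
  have m1: "\<phi> \<in> measurable lborel borel" using mf(1) by simp
  have feq: "\<psi> \<circ> (?g \<circ> \<phi>) = f" by (simp add: fun_eq_iff \<psi>\<phi>)
  have "distr (distr (distr lborel borel \<phi>) borel ?g) borel \<psi> = distr (distr lborel borel (?g \<circ> \<phi>)) borel \<psi>"
    using distr_distr[OF mf(3) m1] by simp
  also have "\<dots> = distr lborel borel (\<psi> \<circ> (?g \<circ> \<phi>))"
    by (rule distr_distr[OF mf(2) measurable_comp[OF m1 mf(3)]])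
  finally have "distr (distr (distr lborel borel \<phi>) borel ?g) borel \<psi> = distr lborel borel f"
    by (simp only: feq)
  moreover have "distr (distr (distr lborel borel \<phi>) borel ?g) borel \<psi> = lborel"
    by (simp only: d\<phi> orth_lborel_wo[OF og] d\<psi>)
  ultimately show ?thesis by simp
qed



lemma transl_lborel:
  fixes x :: "'a::euclidean_space"
  shows "distr lborel borel (\<lambda>z. z + x) = lborel"
proof -
  have "lborel = density (distr lborel borel (\<lambda>z. x + (1::real) *\<^sub>R z)) (\<lambda>_. \<bar>1::real\<bar>^DIM('a))"
    by (rule lborel_affine) simp
  then show ?thesis by (simp add: add.commute density_1)
qed

lemma odd_int_zero:
  fixes K :: "(real^'n::finite) set" and g :: "real^'n \<Rightarrow> real"
  assumes K: "compact K" and sym: "\<And>y. y \<in> K \<Longrightarrow> -y \<in> K"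
    and g: "continuous_on UNIV g" and odd: "\<And>y. g (-y) = - g y"
  shows "integral\<^sup>L lborel (\<lambda>y. indicator K y * g y) = 0"
proof -
  have ou: "orthogonal_transformation (uminus :: real^'n \<Rightarrow> real^'n)"
    by (simp add: orthogonal_transformation_def linear_uminus)
  have d: "distr lborel borel (uminus :: real^'n \<Rightarrow> real^'n) = lborel"
    using orth_lborel[OF ou] .
  have Kb: "K \<in> sets borel" using K by (simp add: borel_compact)
  have mh: "(\<lambda>y. indicator K y * g y) \<in> borel_measurable borel"
    using Kb g by (intro borel_measurable_times borel_measurable_indicator borel_measurable_continuous_onI) auto
  have mu: "(uminus :: real^'n \<Rightarrow> real^'n) \<in> measurable lborel borel" by simp
  have ind: "indicator K (-y) = (indicator K y :: real)" for y
    using sym[of y] sym[of "-y"] by (auto simp: indicator_def)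
  have "integral\<^sup>L lborel (\<lambda>y. indicator K y * g y)
        = integral\<^sup>L (distr lborel borel uminus) (\<lambda>y. indicator K y * g y)"
    by (simp only: d)
  also have "\<dots> = integral\<^sup>L lborel (\<lambda>y. indicator K (-y) * g (-y))"
    by (rule integral_distr[OF mu mh])
  also have "\<dots> = - integral\<^sup>L lborel (\<lambda>y. indicator K y * g y)"
    by (simp add: ind odd)
  finally show ?thesis by simp
qed

lemma main_ineq:
  fixes K :: "(real^'n::finite) set" and f :: "real^'n \<Rightarrow> real^'n" and x :: "real^'n"
  assumes K: "compact K" and sym: "\<And>y. y \<in> K \<Longrightarrow> -y \<in> K"
    and bnd: "\<And>y. y \<in> K \<Longrightarrow> norm y \<le> \<rho>"
    and f: "orthogonal_transformation f"
    and ne: "K \<inter> (\<lambda>y. f y + x) ` K \<noteq> {}"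
  shows "measure lborel K * norm x \<le> 4 * \<rho> * measure lborel (K - (\<lambda>y. f y + x) ` K)"
proof -
  define T where "T = (\<lambda>y. f y + x)"
  define L where "L = T ` K"
  have linf: "linear f" using f by (simp add: orthogonal_transformation_def)
  have nf: "norm (f y) = norm y" for y using f by (simp add: orthogonal_transformation_norm)
  have fneg: "f (-y) = - f y" for y using linf by (simp add: linear_neg)
  have cf: "continuous_on UNIV f" using linf
    by (intro linear_continuous_on) (simp add: linear_conv_bounded_linear)
  have cT: "continuous_on UNIV T" unfolding T_def by (intro continuous_intros cf)
  have injT: "inj T" unfolding T_def using orthogonal_transformation_inj[OF f]
    by (simp add: inj_def)
  have mT: "T \<in> measurable lborel borel" using cT
    by (simp add: borel_measurable_continuous_onI)
  have mf: "f \<in> measurable lborel borel" using cf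
    by (simp add: borel_measurable_continuous_onI)
  have dT: "distr lborel borel T = lborel"
  proof -
    have mx: "(\<lambda>z. z + x) \<in> measurable borel borel" by simp
    have "distr lborel borel T = distr (distr lborel borel f) borel (\<lambda>z. z + x)"
      using distr_distr[OF mx mf] by (simp add: T_def comp_def)
    also have "\<dots> = lborel" by (simp add: orth_lborel[OF f] transl_lborel)
    finally show ?thesis .
  qed
  have LK: "compact L" unfolding L_def using K cT
    by (meson compact_continuous_image continuous_on_subset subset_UNIV)
  have Kb: "K \<in> sets lborel" using K by (simp add: borel_compact)
  have Lb: "L \<in> sets lborel" using LK by (simp add: borel_compact)
  have TL: "T y \<in> L \<longleftrightarrow> y \<in> K" for y unfolding L_def using injT by (auto simp: inj_def)
  have preL: "T -` L = K" using TL by auto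
  have fK: "emeasure lborel K \<noteq> \<infinity>" using emeasure_compact_finite[OF K] by (simp add: less_top[symmetric])
  have fL: "emeasure lborel L \<noteq> \<infinity>" using emeasure_compact_finite[OF LK] by (simp add: less_top[symmetric])
  have mL: "measure lborel L = measure lborel K"
    using measure_distr[OF mT, of L] dT Lb preL by simp
  have bndL: "y \<in> L \<Longrightarrow> norm y \<le> \<rho> + norm x" for y
    unfolding L_def T_def using bnd nf by (auto intro: order.trans[OF norm_triangle_ineq])
  have nx: "norm x \<le> 2 * \<rho>"
  proof -
    obtain z y where z: "z \<in> K" "y \<in> K" "z = f y + x" using ne by auto
    have "norm x = norm (z - f y)" using z by simp
    also have "\<dots> \<le> norm z + norm (f y)" by (rule norm_triangle_ineq4)
    also have "\<dots> \<le> 2 * \<rho>" using bnd z nf by (metis mult_2 add_mono)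
    finally show ?thesis .
  qed
  show ?thesis
  proof (cases "x = 0")
    case True
    then show ?thesis using nx by (simp add: measure_nonneg)
  next
    case False
    define v where "v = x /\<^sub>R norm x"
    have nv: "norm v = 1" using False by (simp add: v_def)
    have xv: "x \<bullet> v = norm x" using False by (simp add: v_def dot_square_norm power2_eq_square)
    define g where "g = (\<lambda>y::real^'n. y \<bullet> v)"
    have cg: "continuous_on UNIV g" unfolding g_def by (intro continuous_intros)
    have godd: "g (-y) = - g y" for y unfolding g_def by (rule inner_minus_left)
    have gb: "\<bar>g y\<bar> \<le> norm y" for y
      unfolding g_def using Cauchy_Schwarz_ineq2[of y v] nv by simp
    define I where "I = (\<lambda>S. integral\<^sup>L lborel (\<lambda>y. indicator S y * g y))"
    have intc: "compact S \<Longrightarrow> integrable lborel (\<lambda>y. indicator S y * g y)" for S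
      using borel_integrable_compact[of S g] cg continuous_on_subset by force
    have intK: "integrable lborel (\<lambda>y. indicator K y * g y)" using intc K by blast
    have intL: "integrable lborel (\<lambda>y. indicator L y * g y)" using intc LK by blast
    have LmK: "L - K \<in> sets lborel" using Kb Lb by auto
    have KmL: "K - L \<in> sets lborel" using Kb Lb by auto
    have intLK: "integrable lborel (\<lambda>y. indicator (L - K) y * g y)"
    proof -
      have "integrable lborel (\<lambda>y. indicator (L - K) y *\<^sub>R (indicator L y * g y))"
        by (rule integrable_mult_indicator[OF LmK intL])
      moreover have "(\<lambda>y. indicator (L - K) y *\<^sub>R (indicator L y * g y)) = (\<lambda>y. indicator (L - K) y * g y)"
        by (auto simp: fun_eq_iff indicator_def)
      ultimately show ?thesis by simp
    qed
    have intKL: "integrable lborel (\<lambda>y. indicator (K - L) y * g y)"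
    proof -
      have "integrable lborel (\<lambda>y. indicator (K - L) y *\<^sub>R (indicator K y * g y))"
        by (rule integrable_mult_indicator[OF KmL intK])
      moreover have "(\<lambda>y. indicator (K - L) y *\<^sub>R (indicator K y * g y)) = (\<lambda>y. indicator (K - L) y * g y)"
        by (auto simp: fun_eq_iff indicator_def)
      ultimately show ?thesis by simp
    qed
    have IK: "I K = 0" unfolding I_def
      using odd_int_zero[OF K sym cg godd] .
    have mh: "(\<lambda>y. indicator L y * g y) \<in> borel_measurable borel"
      using Lb cg by (intro borel_measurable_times borel_measurable_indicator borel_measurable_continuous_onI) auto
    have "I L = integral\<^sup>L (distr lborel borel T) (\<lambda>y. indicator L y * g y)"
      unfolding I_def by (simp only: dT)
    also have "\<dots> = integral\<^sup>L lborel (\<lambda>y. indicator L (T y) * g (T y))"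
      by (rule integral_distr[OF mT mh])
    also have "\<dots> = integral\<^sup>L lborel (\<lambda>y. indicator K y * (f y \<bullet> v) + norm x * indicator K y)"
    proof (rule Bochner_Integration.integral_cong[OF refl])
      fix y
      show "indicator L (T y) * g (T y) = indicator K y * (f y \<bullet> v) + norm x * indicator K y"
        using TL[of y] by (cases "y \<in> K") (simp_all add: indicator_def g_def T_def inner_add_left xv)
    qed
    also have "\<dots> = integral\<^sup>L lborel (\<lambda>y. indicator K y * (f y \<bullet> v)) + norm x * measure lborel K"
    proof -
      have i1: "integrable lborel (\<lambda>y. indicator K y * (f y \<bullet> v))"
      proof -
        have "continuous_on UNIV (\<lambda>y. f y \<bullet> v)" by (intro continuous_intros cf)
        then have "continuous_on K (\<lambda>y. f y \<bullet> v)" by (rule continuous_on_subset) simp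
        then show ?thesis using borel_integrable_compact[OF K, of "\<lambda>y. f y \<bullet> v"] by simp
      qed
      have i2: "integrable lborel (\<lambda>y. norm x * indicator K y)"
        using fK Kb by (auto simp: less_top)
      show ?thesis using i1 i2 Kb by simp
    qed
    also have "integral\<^sup>L lborel (\<lambda>y. indicator K y * (f y \<bullet> v)) = 0"
      by (rule odd_int_zero[OF K sym]) (auto simp: fneg intro!: continuous_intros cf)
    finally have IL: "I L = norm x * measure lborel K" by simp
    have "I L - I K = integral\<^sup>L lborel (\<lambda>y. indicator L y * g y - indicator K y * g y)"
      unfolding I_def using intK intL by simp
    also have "\<dots> = integral\<^sup>L lborel (\<lambda>y. indicator (L - K) y * g y - indicator (K - L) y * g y)"
      by (rule Bochner_Integration.integral_cong) (auto simp: indicator_def)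
    also have "\<dots> = I (L - K) - I (K - L)"
      unfolding I_def using intLK intKL by simp
    finally have dec: "I L - I K = I (L - K) - I (K - L)" .
    have m1: "I (L - K) \<le> (\<rho> + norm x) * measure lborel (L - K)"
    proof -
      have "I (L - K) \<le> integral\<^sup>L lborel (\<lambda>y. (\<rho> + norm x) * indicator (L - K) y)"
        unfolding I_def
      proof (rule integral_mono[OF intLK])
        show "integrable lborel (\<lambda>y. (\<rho> + norm x) * indicator (L - K) y)"
        proof -
          have "emeasure lborel (L - K) \<le> emeasure lborel L" using Lb by (intro emeasure_mono) auto
          moreover have "emeasure lborel L < \<infinity>" using fL by (simp add: less_top)
          ultimately have "emeasure lborel (L - K) < \<infinity>" by (rule le_less_trans)
          then have "integrable lborel (indicator (L - K) :: _ \<Rightarrow> real)"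
            using LmK unfolding integrable_indicator_iff by simp
          then show ?thesis by (rule integrable_mult_right)
        qed
        fix y
        show "indicator (L - K) y * g y \<le> (\<rho> + norm x) * indicator (L - K) y"
          using bndL[of y] gb[of y] by (auto simp: indicator_def)
      qed
      also have "\<dots> = (\<rho> + norm x) * measure lborel (L - K)" using LmK by simp
      finally show ?thesis .
    qed
    have m2: "- I (K - L) \<le> \<rho> * measure lborel (K - L)"
    proof -
      have "- I (K - L) = integral\<^sup>L lborel (\<lambda>y. - (indicator (K - L) y * g y))"
        unfolding I_def by simp
      also have "\<dots> \<le> integral\<^sup>L lborel (\<lambda>y. \<rho> * indicator (K - L) y)"
      proof (rule integral_mono)
        show "integrable lborel (\<lambda>y. - (indicator (K - L) y * g y))" using intKL by simp
        show "integrable lborel (\<lambda>y. \<rho> * indicator (K - L) y)"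
        proof -
          have "emeasure lborel (K - L) \<le> emeasure lborel K" using Kb by (intro emeasure_mono) auto
          moreover have "emeasure lborel K < \<infinity>" using fK by (simp add: less_top)
          ultimately have "emeasure lborel (K - L) < \<infinity>" by (rule le_less_trans)
          then have "integrable lborel (indicator (K - L) :: _ \<Rightarrow> real)"
            using KmL unfolding integrable_indicator_iff by simp
          then show ?thesis by (rule integrable_mult_right)
        qed
        fix y
        show "- (indicator (K - L) y * g y) \<le> \<rho> * indicator (K - L) y"
          using bnd[of y] gb[of y] by (auto simp: indicator_def)
      qed
      also have "\<dots> = \<rho> * measure lborel (K - L)" using KmL by simp
      finally show ?thesis .
    qed
    have eqm: "measure lborel (L - K) = measure lborel (K - L)"
    proof -
      have "measure lborel (L - K) = measure lborel (L - (L \<inter> K))" by (simp add: Diff_Int)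
      also have "\<dots> = measure lborel L - measure lborel (L \<inter> K)"
        using fL Lb Kb by (intro measure_Diff) auto
      also have "\<dots> = measure lborel K - measure lborel (K \<inter> L)" by (simp add: mL Int_commute)
      also have "\<dots> = measure lborel (K - (K \<inter> L))"
        using fK Lb Kb by (intro measure_Diff[symmetric]) auto
      also have "\<dots> = measure lborel (K - L)" by (simp add: Diff_Int)
      finally show ?thesis .
    qed
    have m0: "measure lborel (K - L) \<ge> 0" by (rule measure_nonneg)
    have "measure lborel K * norm x \<le> (2 * \<rho> + norm x) * measure lborel (K - L)"
      using dec IK IL m1 m2 eqm by (simp add: algebra_simps)
    also have "\<dots> \<le> 4 * \<rho> * measure lborel (K - L)"
      using nx m0 by (intro mult_right_mono) auto
    finally show ?thesis unfolding L_def T_def .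
  qed
qed



lemma rb_props:
  fixes e :: "'n::finite" and u :: real and R :: "real \<Rightarrow> real"
  assumes u: "u > 0"
    and cR: "continuous_on {-u..u} R"
    and sR: "\<And>s. s \<in> {-u..u} \<Longrightarrow> R (-s) = R s"
  shows "compact (rev_body e u R)" "\<And>y. y \<in> rev_body e u R \<Longrightarrow> -y \<in> rev_body e u R"
    "\<exists>\<rho>>0. \<forall>y\<in>rev_body e u R. norm y \<le> \<rho>"
proof -
  let ?K = "rev_body e u R"
  obtain M where M: "M > 0" "\<And>s. s \<in> {-u..u} \<Longrightarrow> norm (R s) \<le> M"
    using compact_imp_bounded[OF compact_continuous_image[OF cR compact_Icc]]
    unfolding bounded_pos by auto
  have nb: "norm y \<le> u + M" if y: "y \<in> ?K" for y
  proof -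
    have ye: "y $ e \<in> {-u..u}" and ys: "(\<Sum>i\<in>UNIV - {e}. (y $ i)^2) \<le> (R (y $ e))^2"
      using y by (auto simp: rev_body_def)
    have "(norm y)^2 = y \<bullet> y" by (simp add: dot_square_norm)
    also have "\<dots> = (\<Sum>i\<in>UNIV. (y $ i)^2)"
      by (simp add: inner_vec_def power2_eq_square)
    also have "\<dots> = (y $ e)^2 + (\<Sum>i\<in>UNIV - {e}. (y $ i)^2)"
      by (simp add: sum.remove)
    also have "\<dots> \<le> u^2 + M^2"
    proof (rule add_mono)
      have "\<bar>y $ e\<bar> \<le> \<bar>u\<bar>" using ye u by auto
      then show "(y $ e)^2 \<le> u^2" by (simp only: abs_le_square_iff)
      have "\<bar>R (y $ e)\<bar> \<le> \<bar>M\<bar>" using M(2)[OF ye] M(1) by simp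
      then have "(R (y $ e))^2 \<le> M^2" by (simp only: abs_le_square_iff)
      then show "(\<Sum>i\<in>UNIV - {e}. (y $ i)^2) \<le> M^2" using ys by linarith
    qed
    also have "\<dots> \<le> (u + M)^2"
    proof -
      have "0 \<le> 2 * u * M" using u M by simp
      then show ?thesis unfolding power2_sum by linarith
    qed
    finally have sq: "(norm y)^2 \<le> (u + M)^2" .
    show ?thesis by (rule power2_le_imp_le[OF sq]) (use u M in simp)
  qed
  then show "\<exists>\<rho>>0. \<forall>y\<in>?K. norm y \<le> \<rho>" using u M
    by (intro exI[of _ "u + M"]) auto
  show "-y \<in> ?K" if "y \<in> ?K" for y
    using that sR[of "y $ e"] by (auto simp: rev_body_def)
  have eq: "?K = {y \<in> {y. -u \<le> y $ e \<and> y $ e \<le> u}. (\<Sum>i\<in>UNIV - {e}. (y $ i)^2) \<le> (R (y $ e))^2}"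
    by (auto simp: rev_body_def)
  have cl: "closed ?K" unfolding eq
  proof (rule continuous_on_closed_Collect_le)
    show "closed {y::real^'n. -u \<le> y $ e \<and> y $ e \<le> u}"
      by (intro closed_Collect_conj closed_Collect_le continuous_intros)
    show "continuous_on {y::real^'n. -u \<le> y $ e \<and> y $ e \<le> u} (\<lambda>y. \<Sum>i\<in>UNIV - {e}. (y $ i)^2)"
      by (intro continuous_intros)
    have "continuous_on {y::real^'n. -u \<le> y $ e \<and> y $ e \<le> u} (\<lambda>y. R (y $ e))"
      by (rule continuous_on_compose2[OF cR]) (auto intro!: continuous_intros)
    then show "continuous_on {y::real^'n. -u \<le> y $ e \<and> y $ e \<le> u} (\<lambda>y. (R (y $ e))^2)"
      by (intro continuous_intros)
  qed
  have "bounded ?K" using nb by (auto simp: bounded_iff)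
  then show "compact ?K" using cl by (simp add: compact_eq_bounded_closed)
qed

theorem proposition4p3:
  fixes e :: "'n::finite" and u :: real and R :: "real \<Rightarrow> real"
    and xK :: "real^'n" and rK :: real
  assumes "CARD('n) \<ge> 2"
    and "u > 0"
    and "continuous_on {-u..u} R"
    and "\<And>s. s \<in> {-u..u} \<Longrightarrow> R s \<ge> 0"
    and "\<And>s. s \<in> {-u..u} \<Longrightarrow> R (-s) = R s"
    and "xK \<in> rev_body e u R" and "rK > 0"
    and "cball xK rK \<subseteq> rev_body e u R"
  shows "\<exists>c>0. \<forall>Q x. rotation_matrix Q \<longrightarrow>
           rev_body e u R \<inter> (\<lambda>y. Q *v y + x) ` rev_body e u R \<noteq> {} \<longrightarrow>
           measure lebesgue (rev_body e u R - (\<lambda>y. Q *v y + x) ` rev_body e u R) \<ge> c * norm x"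
proof -
  let ?K = "rev_body e u R"
  note P = rb_props[where e=e, OF assms(2,3,5)]
  obtain \<rho> where \<rho>: "\<rho> > 0" "\<And>y. y \<in> ?K \<Longrightarrow> norm y \<le> \<rho>" using P(3) by auto
  have Kb: "?K \<in> sets lborel" using P(1) by (simp add: borel_compact)
  have "measure lborel (cball xK rK) \<le> measure lborel ?K"
    using assms(8) P(1) by (intro measure_mono_fmeasurable) (auto simp: fmeasurable_compact)
  moreover have "measure lborel (cball xK rK) > 0"
    using assms(7) content_cball_eq_0_iff[of xK rK] measure_nonneg[of lborel "cball xK rK"] by linarith
  ultimately have mK: "measure lborel ?K > 0" by linarith
  show ?thesis
  proof (intro exI[of _ "measure lborel ?K / (4 * \<rho>)"] conjI allI impI)
    show "measure lborel ?K / (4 * \<rho>) > 0" using mK \<rho> by simp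
    fix Q :: "real^'n^'n" and x :: "real^'n"
    assume Q: "rotation_matrix Q" and ne: "?K \<inter> (\<lambda>y. Q *v y + x) ` ?K \<noteq> {}"
    have oQ: "orthogonal_transformation ((*v) Q)"
      using Q by (simp add: rotation_matrix_def orthogonal_transformation_matrix matrix_of_matrix_vector_mul)
    have ineq: "measure lborel ?K * norm x \<le> 4 * \<rho> * measure lborel (?K - (\<lambda>y. Q *v y + x) ` ?K)"
      using main_ineq[OF P(1) P(2) \<rho>(2) oQ] ne by simp
    have cL: "compact ((\<lambda>y. Q *v y + x) ` ?K)"
      using P(1) by (intro compact_continuous_image) (auto intro!: continuous_intros)
    then have "?K - (\<lambda>y. Q *v y + x) ` ?K \<in> sets lborel" using Kb by (auto simp: borel_compact)
    then have eqm: "measure lebesgue (?K - (\<lambda>y. Q *v y + x) ` ?K) = measure lborel (?K - (\<lambda>y. Q *v y + x) ` ?K)"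
      by simp
    have "measure lborel ?K / (4 * \<rho>) * norm x = (measure lborel ?K * norm x) / (4 * \<rho>)" by simp
    also have "\<dots> \<le> measure lborel (?K - (\<lambda>y. Q *v y + x) ` ?K)"
      using ineq \<rho>(1) by (simp add: divide_le_eq mult.commute)
    finally show "measure lebesgue (?K - (\<lambda>y. Q *v y + x) ` ?K) \<ge> measure lborel ?K / (4 * \<rho>) * norm x"
      using eqm by simp
  qed
qed

end
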